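(* Let $\sigma$ be a permutation of $\{1,\dots,n\}$ that avoids the pattern $321$, and let $U$ be its upper subsequence. Then there exist points $p_i=(x_i,y_i)$, $1\le i\le n$, with integer coordinates $x_i,y_i\in\{1,\dots,2n\}$, such that $x_i<x_j$ if and only if $i<j$, $y_i<y_j$ if and only if $\sigma_i<\sigma_j$, $x_i=y_i$ for every $i\in U$, and $y_i<x_i$ for every $i\notin U$ (that is, $\sigma$ is embedded order-isomorphically in the bottom-right triangle of a $2n\times 2n$ grid with its upper subsequence on the diagonal).
   Context: A permutation avoids $321$ if it has no indices $a<b<c$ with $\sigma_a>\sigma_b>\sigma_c$. Such a permutation can be partitioned into two increasing subsequences; the upper subsequence is chosen so that it lies above and to the left of the other (lower) subsequence in the plot $\{(i,\sigma_i)\}$ and is maximal with this property, i.e. it is the set of indices $i$ such that $\sigma_i>\sigma_j$ for all $j<i$ (the left-to-right maxima). *)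

theory Defs
  imports "HOL-Combinatorics.Permutations"
begin

text \<open>Permutations of {1..n} are functions sigma with sigma permutes {1..n}.\<close>

definition avoids_321 :: "nat \<Rightarrow> (nat \<Rightarrow> nat) \<Rightarrow> bool" where
  "avoids_321 n \<sigma> \<longleftrightarrow>
     \<not> (\<exists>a b c. 1 \<le> a \<and> a < b \<and> b < c \<and> c \<le> n \<and> \<sigma> a > \<sigma> b \<and> \<sigma> b > \<sigma> c)"

definition upper_subseq :: "nat \<Rightarrow> (nat \<Rightarrow> nat) \<Rightarrow> nat set" where
  "upper_subseq n \<sigma> = {i \<in> {1..n}. \<forall>j \<in> {1..n}. j < i \<longrightarrow> \<sigma> j < \<sigma> i}"

end

theory Submission
  imports Defs
begin

lemma card_less_perm:
  assumes "\<sigma> permutes {1..n}" "i \<in> {1..n}"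
  shows "card {k\<in>{1..n}. \<sigma> k < \<sigma> i} = \<sigma> i - 1"
proof -
  have si: "\<sigma> i \<in> {1..n}" using assms permutes_in_image by metis
  have "\<sigma> ` {k\<in>{1..n}. \<sigma> k < \<sigma> i} = {1..<\<sigma> i}"
  proof
    show "\<sigma> ` {k\<in>{1..n}. \<sigma> k < \<sigma> i} \<subseteq> {1..<\<sigma> i}"
      using permutes_in_image[OF assms(1)] by fastforce
    show "{1..<\<sigma> i} \<subseteq> \<sigma> ` {k\<in>{1..n}. \<sigma> k < \<sigma> i}"
    proof
      fix w assume w: "w \<in> {1..<\<sigma> i}"
      then have "w \<in> {1..n}" using si by auto
      then have "w \<in> \<sigma> ` {1..n}" using permutes_image[OF assms(1)] by simp
      then obtain k where "k \<in> {1..n}" "w = \<sigma> k" by auto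
      then show "w \<in> \<sigma> ` {k\<in>{1..n}. \<sigma> k < \<sigma> i}" using w by auto
    qed
  qed
  moreover have "inj_on \<sigma> {k\<in>{1..n}. \<sigma> k < \<sigma> i}"
    using permutes_inj[OF assms(1)] by (meson inj_on_subset subset_UNIV)
  ultimately show ?thesis using card_image by fastforce
qed

lemma card_split:
  assumes "finite S"
  shows "card {k\<in>S. P k} = card {k\<in>S\<inter>U. P k} + card {k\<in>S-U. P k}"
proof -
  have "{k\<in>S. P k} = {k\<in>S\<inter>U. P k} \<union> {k\<in>S-U. P k}" by auto
  moreover have "card ({k\<in>S\<inter>U. P k} \<union> {k\<in>S-U. P k}) = card {k\<in>S\<inter>U. P k} + card {k\<in>S-U. P k}"
    by (rule card_Un_disjoint) (use assms in auto)
  ultimately show ?thesis by simp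
qed

theorem lemma2:
  fixes n :: nat and \<sigma> :: "nat \<Rightarrow> nat"
  assumes "\<sigma> permutes {1..n}"
    and "avoids_321 n \<sigma>"
  shows "\<exists>x y :: nat \<Rightarrow> int.
           (\<forall>i \<in> {1..n}. x i \<in> {1..2 * int n} \<and> y i \<in> {1..2 * int n})
         \<and> (\<forall>i \<in> {1..n}. \<forall>j \<in> {1..n}. x i < x j \<longleftrightarrow> i < j)
         \<and> (\<forall>i \<in> {1..n}. \<forall>j \<in> {1..n}. y i < y j \<longleftrightarrow> \<sigma> i < \<sigma> j)
         \<and> (\<forall>i \<in> upper_subseq n \<sigma>. x i = y i)
         \<and> (\<forall>i \<in> {1..n} - upper_subseq n \<sigma>. y i < x i)"
proof -
  note perm = assms(1)
  have sin: "\<And>i. i \<in> {1..n} \<Longrightarrow> \<sigma> i \<in> {1..n}" using perm permutes_in_image by metis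
  have inj: "\<And>a b. \<sigma> a = \<sigma> b \<Longrightarrow> a = b" using permutes_inj[OF perm] by (simp add: inj_eq)
  define U where "U = upper_subseq n \<sigma>"
  define N where "N = {1..n} - U"
  define A where "A i = {k\<in>N. \<exists>j\<in>{1..n}. j \<le> i \<and> \<sigma> k < \<sigma> j}" for i
  define B where "B v = {k\<in>N. \<exists>u\<in>U. \<sigma> u \<le> v \<and> k < u}" for v
  define x where "x i = int (i + card (A i))" for i
  define y where "y i = int (\<sigma> i + card (B (\<sigma> i)))" for i
  have Umem: "\<And>i. i \<in> U \<longleftrightarrow> i \<in> {1..n} \<and> (\<forall>j\<in>{1..n}. j < i \<longrightarrow> \<sigma> j < \<sigma> i)"
    by (simp add: U_def upper_subseq_def)
  have finN: "finite N" by (simp add: N_def)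
  have cA: "card (A i) \<le> n" for i
  proof -
    have "card (A i) \<le> card {1..n}" by (rule card_mono) (auto simp: A_def N_def)
    then show ?thesis by simp
  qed
  have cB: "card (B v) \<le> n" for v
  proof -
    have "card (B v) \<le> card {1..n}" by (rule card_mono) (auto simp: B_def N_def)
    then show ?thesis by simp
  qed
  have Amono: "i \<le> i' \<Longrightarrow> card (A i) \<le> card (A i')" for i i'
    by (rule card_mono) (use finN in \<open>auto simp: A_def intro: le_trans\<close>)
  have Bmono: "v \<le> v' \<Longrightarrow> card (B v) \<le> card (B v')" for v v'
    by (rule card_mono) (use finN in \<open>auto simp: B_def intro: le_trans\<close>)
  have P1: "\<forall>i \<in> {1..n}. x i \<in> {1..2 * int n} \<and> y i \<in> {1..2 * int n}"
  proof
    fix i assume i: "i \<in> {1..n}"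
    show "x i \<in> {1..2 * int n} \<and> y i \<in> {1..2 * int n}"
      using i sin[OF i] cA[of i] cB[of "\<sigma> i"] by (auto simp: x_def y_def)
  qed
  have P2: "\<forall>i \<in> {1..n}. \<forall>j \<in> {1..n}. x i < x j \<longleftrightarrow> i < j"
  proof (intro ballI)
    fix i j assume "i \<in> {1..n}" "j \<in> {1..n}"
    show "x i < x j \<longleftrightarrow> i < j"
    proof (cases "i < j")
      case True then show ?thesis using Amono[of i j] by (simp add: x_def)
    next
      case False then show ?thesis using Amono[of j i] by (simp add: x_def)
    qed
  qed
  have P3: "\<forall>i \<in> {1..n}. \<forall>j \<in> {1..n}. y i < y j \<longleftrightarrow> \<sigma> i < \<sigma> j"
  proof (intro ballI)
    fix i j assume "i \<in> {1..n}" "j \<in> {1..n}"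
    show "y i < y j \<longleftrightarrow> \<sigma> i < \<sigma> j"
    proof (cases "\<sigma> i < \<sigma> j")
      case True then show ?thesis using Bmono[of "\<sigma> i" "\<sigma> j"] by (simp add: y_def)
    next
      case False then show ?thesis using Bmono[of "\<sigma> j" "\<sigma> i"] by (simp add: y_def)
    qed
  qed
  have cless: "i \<in> {1..n} \<Longrightarrow> card {k\<in>{1..n}. k < i} = i - 1" for i
  proof -
    assume "i \<in> {1..n}"
    then have "{k\<in>{1..n}. k < i} = {1..<i}" by auto
    then show ?thesis by simp
  qed
  have P4: "\<forall>i \<in> U. x i = y i"
  proof
    fix i assume iU: "i \<in> U"
    then have i: "i \<in> {1..n}" and im: "\<And>j. j\<in>{1..n} \<Longrightarrow> j < i \<Longrightarrow> \<sigma> j < \<sigma> i"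
      using Umem by auto
    have Ai: "A i = {k\<in>N. \<sigma> k < \<sigma> i}"
    proof
      show "A i \<subseteq> {k\<in>N. \<sigma> k < \<sigma> i}"
      proof
        fix k assume "k \<in> A i"
        then obtain j where "k \<in> N" "j\<in>{1..n}" "j \<le> i" "\<sigma> k < \<sigma> j" by (auto simp: A_def)
        then show "k \<in> {k\<in>N. \<sigma> k < \<sigma> i}" using im[of j]
          by (cases "j = i") auto
      qed
      show "{k\<in>N. \<sigma> k < \<sigma> i} \<subseteq> A i" using i by (auto simp: A_def)
    qed
    have Bi: "B (\<sigma> i) = {k\<in>N. k < i}"
    proof
      show "B (\<sigma> i) \<subseteq> {k\<in>N. k < i}"
      proof
        fix k assume "k \<in> B (\<sigma> i)"
        then obtain u where u: "k \<in> N" "u \<in> U" "\<sigma> u \<le> \<sigma> i" "k < u" by (auto simp: B_def)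
        have "u \<le> i"
        proof (rule ccontr)
          assume "\<not> u \<le> i"
          then have "\<sigma> i < \<sigma> u" using u(2) i Umem by auto
          then show False using u(3) by simp
        qed
        then show "k \<in> {k\<in>N. k < i}" using u by auto
      qed
      show "{k\<in>N. k < i} \<subseteq> B (\<sigma> i)" using iU by (auto simp: B_def)
    qed
    have UU: "{k\<in>{1..n}\<inter>U. k < i} = {k\<in>{1..n}\<inter>U. \<sigma> k < \<sigma> i}"
    proof (intro set_eqI iffI)
      fix k assume "k \<in> {k\<in>{1..n}\<inter>U. k < i}"
      then show "k \<in> {k\<in>{1..n}\<inter>U. \<sigma> k < \<sigma> i}" using im by auto
    next
      fix k assume k: "k \<in> {k\<in>{1..n}\<inter>U. \<sigma> k < \<sigma> i}"
      have "k < i"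
      proof (rule ccontr)
        assume "\<not> k < i"
        moreover have "k \<noteq> i" using k by auto
        ultimately have "i < k" by simp
        then have "\<sigma> i < \<sigma> k" using k i Umem by auto
        then show False using k by simp
      qed
      then show "k \<in> {k\<in>{1..n}\<inter>U. k < i}" using k by auto
    qed
    have e1: "i - 1 = card {k\<in>{1..n}\<inter>U. k < i} + card (B (\<sigma> i))"
      using cless[OF i] card_split[of "{1..n}" "\<lambda>k. k < i" U] Bi by (simp add: N_def)
    have e2: "\<sigma> i - 1 = card {k\<in>{1..n}\<inter>U. \<sigma> k < \<sigma> i} + card (A i)"
      using card_less_perm[OF perm i] card_split[of "{1..n}" "\<lambda>k. \<sigma> k < \<sigma> i" U] Ai
      by (simp add: N_def)
    have "i \<ge> 1" "\<sigma> i \<ge> 1" using i sin[OF i] by auto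
    then show "x i = y i" using e1 e2 UU by (simp add: x_def y_def)
  qed
  have P5: "\<forall>i \<in> N. y i < x i"
  proof
    fix i assume iN: "i \<in> N"
    then have i: "i \<in> {1..n}" and iU: "i \<notin> U" by (auto simp: N_def)
    then obtain j where j: "j \<in> {1..n}" "j < i" "\<not> \<sigma> j < \<sigma> i" using Umem by auto
    have sj: "\<sigma> i < \<sigma> j" using j inj[of j i] by (cases "\<sigma> j = \<sigma> i") auto
    have B1: "B (\<sigma> i) \<subseteq> {k\<in>N. k < i}"
    proof
      fix k assume "k \<in> B (\<sigma> i)"
      then obtain u where u: "k \<in> N" "u \<in> U" "\<sigma> u \<le> \<sigma> i" "k < u" by (auto simp: B_def)
      have "u < i"
      proof (rule ccontr)
        assume "\<not> u < i"
        moreover have "u \<noteq> i" using u iU by auto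
        ultimately have "j < u" using j by simp
        then have "\<sigma> j < \<sigma> u" using u(2) j Umem by auto
        then show False using u(3) sj by simp
      qed
      then show "k \<in> {k\<in>N. k < i}" using u by auto
    qed
    have A1: "insert i {k\<in>N. k < i} \<subseteq> A i"
    proof
      fix k assume k: "k \<in> insert i {k\<in>N. k < i}"
      show "k \<in> A i"
      proof (cases "k = i")
        case True then show ?thesis using iN j sj unfolding A_def by (intro CollectI conjI bexI[of _ j]) auto
      next
        case False
        then have kN: "k \<in> N" "k < i" using k by auto
        then have "k \<in> {1..n}" "k \<notin> U" by (auto simp: N_def)
        then obtain j' where j': "j' \<in> {1..n}" "j' < k" "\<not> \<sigma> j' < \<sigma> k" using Umem by auto
        have "\<sigma> k < \<sigma> j'" using j' inj[of j' k] by (cases "\<sigma> j' = \<sigma> k") auto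
        then show ?thesis using kN j' unfolding A_def by (intro CollectI conjI bexI[of _ j']) auto
      qed
    qed
    have "card (B (\<sigma> i)) \<le> card {k\<in>N. k < i}" by (rule card_mono) (use finN B1 in auto)
    also have "\<dots> < card (insert i {k\<in>N. k < i})" using finN by (simp add: card_insert_if)
    also have "\<dots> \<le> card (A i)" by (rule card_mono) (use finN A1 in \<open>auto simp: A_def\<close>)
    finally have cBA: "card (B (\<sigma> i)) < card (A i)" .
    have sub: "{k\<in>{1..n}. \<sigma> k < \<sigma> i} \<subseteq> {k\<in>{1..n}. k < i}"
    proof
      fix k assume k: "k \<in> {k\<in>{1..n}. \<sigma> k < \<sigma> i}"
      have "k < i"
      proof (rule ccontr)
        assume "\<not> k < i"
        moreover have "k \<noteq> i" using k by auto
        ultimately have "i < k" by simp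
        then show False using assms(2) j i k sj unfolding avoids_321_def by fastforce
      qed
      then show "k \<in> {k\<in>{1..n}. k < i}" using k by auto
    qed
    have "card {k\<in>{1..n}. \<sigma> k < \<sigma> i} \<le> card {k\<in>{1..n}. k < i}"
      by (rule card_mono[OF _ sub]) simp
    then have "\<sigma> i - 1 \<le> i - 1" using card_less_perm[OF perm i] cless[OF i] by simp
    moreover have "\<sigma> i \<ge> 1" using sin[OF i] by auto
    moreover have "i \<ge> 1" using i by auto
    ultimately show "y i < x i" using cBA by (simp add: x_def y_def)
  qed
  show ?thesis
    apply (rule exI[of _ x], rule exI[of _ y])
    using P1 P2 P3 P4 P5 by (simp add: U_def N_def)
qed

end
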